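(* For the Bell-state measurement $\Phi=(\Phi^b)_{b=0}^3$ on $\mathbb{C}^2\otimes\mathbb{C}^2$, $Q_{\mathrm{sep}}(\Phi)=\tfrac12$.
   Context: Bell states: $|\Phi^0\rangle=(|00\rangle+|11\rangle)/\sqrt2$, $|\Phi^1\rangle=(|00\rangle-|11\rangle)/\sqrt2$, $|\Phi^2\rangle=(|01\rangle+|10\rangle)/\sqrt2$, $|\Phi^3\rangle=(|01\rangle-|10\rangle)/\sqrt2$, $\Phi^b=|\Phi^b\rangle\langle\Phi^b|$. $Q_{\mathrm{sep}}(\mathscr{P}):=\frac{1}{|B_1'||B_2'|}\max_{\mathscr{F}\in\mathcal{M}_{\mathrm{sep}}}\sum_{j}\operatorname{tr}(F^jP^j)$, where $\mathcal{M}_{\mathrm{sep}}$ is the set of POVMs with the same number of outcomes on $\mathcal{H}_{B_1'}\otimes\mathcal{H}_{B_2'}$ (here $\mathbb{C}^2\otimes\mathbb{C}^2$) whose elements are all separable operators. *)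

theory Defs
  imports "HOL-Analysis.Analysis" "HOL-Library.Numeral_Type"
begin

text \<open>Operators on a finite-dimensional complex Hilbert space with orthonormal basis
indexed by the finite type 'n are represented as matrices complex^'n^'n.
A bipartite space H_1 (x) H_2 has basis indexed by the product type 'a \<times> 'b.\<close>

definition mtrace :: "complex^'n^'n \<Rightarrow> complex" where
  "mtrace M = (\<Sum>i\<in>UNIV. M $ i $ i)"

definition psd :: "complex^'n^'n \<Rightarrow> bool" where
  "psd A \<longleftrightarrow> (\<forall>v :: complex^'n.
      let q = (\<Sum>i\<in>UNIV. \<Sum>j\<in>UNIV. cnj (v $ i) * A $ i $ j * v $ j)
      in Im q = 0 \<and> Re q \<ge> 0)"

definition kron :: "complex^'a^'a \<Rightarrow> complex^'b^'b \<Rightarrow> complex^('a \<times> 'b)^('a \<times> 'b)" where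
  "kron A B = (\<chi> p. \<chi> q. A $ fst p $ fst q * B $ snd p $ snd q)"

definition separable_op :: "complex^('a::finite \<times> 'b::finite)^('a \<times> 'b) \<Rightarrow> bool" where
  "separable_op F \<longleftrightarrow> (\<exists>(n::nat) (A :: nat \<Rightarrow> complex^'a^'a) (B :: nat \<Rightarrow> complex^'b^'b).
      (\<forall>i<n. psd (A i) \<and> psd (B i)) \<and> F = (\<Sum>i<n. kron (A i) (B i)))"

definition sep_POVM :: "nat \<Rightarrow> (nat \<Rightarrow> complex^('a::finite \<times> 'b::finite)^('a \<times> 'b)) \<Rightarrow> bool" where
  "sep_POVM m F \<longleftrightarrow> (\<forall>j<m. psd (F j) \<and> separable_op (F j)) \<and> (\<Sum>j<m. F j) = mat 1"

definition Q_sep :: "nat \<Rightarrow> (nat \<Rightarrow> complex^('a::finite \<times> 'b::finite)^('a \<times> 'b)) \<Rightarrow> real" where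
  "Q_sep m P = (1 / (real CARD('a) * real CARD('b))) *
     (GREATEST v. \<exists>F. sep_POVM m F \<and> v = Re (\<Sum>j<m. mtrace (F j ** P j)))"

definition proj :: "complex^'n \<Rightarrow> complex^'n^'n" where
  "proj phi = (\<chi> i. \<chi> j. phi $ i * cnj (phi $ j))"

definition ket2 :: "2 \<Rightarrow> 2 \<Rightarrow> complex^(2 \<times> 2)" where
  "ket2 x y = (\<chi> p. if p = (x, y) then 1 else 0)"

definition bell_vec :: "nat \<Rightarrow> complex^(2 \<times> 2)" where
  "bell_vec b =
     (if b = 0 then (1 / sqrt 2) *\<^sub>R (ket2 0 0 + ket2 1 1)
      else if b = 1 then (1 / sqrt 2) *\<^sub>R (ket2 0 0 - ket2 1 1)
      else if b = 2 then (1 / sqrt 2) *\<^sub>R (ket2 0 1 + ket2 1 0)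
      else (1 / sqrt 2) *\<^sub>R (ket2 0 1 - ket2 1 0))"

definition bell_meas :: "nat \<Rightarrow> complex^(2 \<times> 2)^(2 \<times> 2)" where
  "bell_meas b = proj (bell_vec b)"

end

theory Submission imports Defs begin
lemma two0: "(2::2) = 0" by simp
lemma U2: "(UNIV::2 set) = {0,1}" using exhaust_2 two0 by (metis UNIV_2 insert_commute)

lemma psd2: assumes "psd (A::complex^2^2)"
  shows "Im (cnj a * A$0$0 * a + cnj a * A$0$1 * b + cnj b * A$1$0 * a + cnj b * A$1$1 * b) = 0 \<and>
         Re (cnj a * A$0$0 * a + cnj a * A$0$1 * b + cnj b * A$1$0 * a + cnj b * A$1$1 * b) \<ge> 0"
proof -
  let ?v = "(\<chi> i. if i = 0 then a else b) :: complex^2"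
  from assms have "let q = (\<Sum>i\<in>UNIV. \<Sum>j\<in>UNIV. cnj (?v $ i)  *  A $ i $ j  *  ?v $ j)
      in Im q = 0 \<and> Re q \<ge> 0" unfolding psd_def by blast
  then show ?thesis by (simp add: U2 Let_def algebra_simps)
qed

lemma quad_facts:
  fixes p z w r :: complex
  assumes H: "\<And>a b. Im (cnj a * p * a + cnj a * z * b + cnj b * w * a + cnj b * r * b) = 0 \<and>
         Re (cnj a * p * a + cnj a * z * b + cnj b * w * a + cnj b * r * b) \<ge> 0"
  shows "Im p = 0" "Re p \<ge> 0" "Im r = 0" "Re r \<ge> 0" "w = cnj z" "(cmod z)^2 \<le> Re p  *  Re r"
proof -
  show p: "Im p = 0" "Re p \<ge> 0" using H[of 1 0] by simp_all
  show r: "Im r = 0" "Re r \<ge> 0" using H[of 0 1] by simp_all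
  have h1: "Im z + Im w = 0" using H[of 1 1] p r by simp
  have h2: "Re z - Re w = 0" using H[of 1 \<i>] p r by simp
  show wz: "w = cnj z" using h1 h2 by (simp add: complex_eq_iff)
  define c where "c = (cmod z)^2"
  have c0: "c \<ge> 0" by (simp add: c_def)
  have Q: "Re p  *  t^2 - 2 * c * t + (c  *  Re r) \<ge> 0" for t :: real
  proof -
    have "Re (cnj (of_real t) * p * of_real t + cnj (of_real t) * z * (-w) + cnj (-w) * w * of_real t + cnj (-w) * r * (-w)) \<ge> 0"
      using H by blast
    then show ?thesis using p r wz unfolding c_def cmod_power2
      by (simp add: algebra_simps power2_eq_square)
  qed
  show "(cmod z)^2 \<le> Re p  *  Re r"
  proof (cases "Re p = 0")
    case True
    have "c = 0"
    proof (rule ccontr)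
      assume "c \<noteq> 0" then have "c > 0" using c0 by simp
      have "- 2 * c * (Re r + 1) + c  *  Re r \<ge> 0" using Q[of "Re r + 1"] True by simp
      then show False
      proof -
        have "c * (Re r + 2) > 0" using \<open>c > 0\<close> r by simp
        then show False using \<open>- 2 * c * (Re r + 1) + c  *  Re r \<ge> 0\<close> by (simp add: algebra_simps)
      qed
    qed
    then show ?thesis using True c_def by simp
  next
    case False
    then have pp: "Re p > 0" using p by simp
    have "Re p  *  (c/Re p)^2 - 2 * c * (c/Re p) + c  *  Re r \<ge> 0" using Q by blast
    then have cc: "c * (Re p * Re r - c) \<ge> 0" using pp
      by (simp add: power2_eq_square field_simps)
    have "c \<le> Re p * Re r"
    proof (cases "c = 0")
      case True then show ?thesis using pp r by simp
    next
      case False then have "c > 0" using c0 by simp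
      then show ?thesis using cc by (simp add: zero_le_mult_iff)
    qed
    then show ?thesis by (simp add: c_def)
  qed
qed
lemma U22: "(UNIV::(2\<times>2) set) = {(0,0),(0,1),(1,0),(1,1)}" using U2 by auto
definition "s2 = complex_of_real (1/sqrt 2)"
lemma cs2[simp]: "cnj s2 = s2" unfolding s2_def by simp
lemma s2sq: "s2 * s2 = 1/2" 
proof -
  have "(1/sqrt 2) * (1/sqrt 2) = (1/2::real)" by (simp flip: power2_eq_square add: power_divide)
  then show ?thesis unfolding s2_def by (metis of_real_mult of_real_divide of_real_1 of_real_numeral)
qed
lemma s2sq': "s2 * (s2 * x) = x/2" using s2sq by (metis mult.assoc mult.commute times_divide_eq_right mult_1)
lemma bv: "bell_vec b $ (x,y) = s2 * (if b = 0 then (if (x,y)=(0,0) \<or> (x,y)=(1,1) then 1 else 0)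
   else if b = 1 then (if (x,y)=(0,0) then 1 else if (x,y)=(1,1) then -1 else 0)
   else if b = 2 then (if (x,y)=(0,1) \<or> (x,y)=(1,0) then 1 else 0)
   else (if (x,y)=(0,1) then 1 else if (x,y)=(1,0) then -1 else 0))"
  unfolding bell_vec_def ket2_def s2_def by (simp add: vector_scaleR_component) (auto simp: scaleR_conv_of_real)
lemma tr0: "mtrace (M ** bell_meas 0) = (M$(0,0)$(0,0) + M$(0,0)$(1,1) + M$(1,1)$(0,0) + M$(1,1)$(1,1))/2"
  unfolding mtrace_def bell_meas_def proj_def matrix_matrix_mult_def
  by (simp add: U22 bv s2sq' s2sq add_divide_distrib)
lemma tr1: "mtrace (M ** bell_meas 1) = (M$(0,0)$(0,0) - M$(0,0)$(1,1) - M$(1,1)$(0,0) + M$(1,1)$(1,1))/2"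
  unfolding mtrace_def bell_meas_def proj_def matrix_matrix_mult_def
  by (simp add: U22 bv s2sq' s2sq add_divide_distrib diff_divide_distrib)
lemma tr2: "mtrace (M ** bell_meas 2) = (M$(0,1)$(0,1) + M$(0,1)$(1,0) + M$(1,0)$(0,1) + M$(1,0)$(1,0))/2"
  unfolding mtrace_def bell_meas_def proj_def matrix_matrix_mult_def
  by (simp add: U22 bv s2sq' s2sq add_divide_distrib)
lemma tr3: "mtrace (M ** bell_meas 3) = (M$(0,1)$(0,1) - M$(0,1)$(1,0) - M$(1,0)$(0,1) + M$(1,0)$(1,0))/2"
  unfolding mtrace_def bell_meas_def proj_def matrix_matrix_mult_def
  by (simp add: U22 bv s2sq' s2sq add_divide_distrib diff_divide_distrib)
lemma amgm_bound:
  fixes z w u :: complex and a0 a1 b0 b1 :: real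
  assumes "a0 \<ge> 0" "a1 \<ge> 0" "b0 \<ge> 0" "b1 \<ge> 0"
    "(cmod z)^2 \<le> a0 * a1" "(cmod w)^2 \<le> b0 * b1" "cmod u \<le> cmod z * cmod w"
  shows "2 * \<bar>Re u\<bar> \<le> a0 * b1 + a1 * b0"
proof -
  have "(cmod z * cmod w)^2 \<le> (a0*a1)*(b0*b1)"
    unfolding power_mult_distrib using assms by (simp add: mult_mono)
  also have "\<dots> * 4 \<le> (a0 * b1 + a1 * b0)^2"
    using sum_squares_ge_zero[of "a0*b1 - a1*b0" 0] by (simp add: power2_eq_square algebra_simps)
  finally have "(2 * (cmod z * cmod w))^2 \<le> (a0 * b1 + a1 * b0)^2" by (simp add: power_mult_distrib)
  then have "2 * (cmod z * cmod w) \<le> a0 * b1 + a1 * b0"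
    by (rule power2_le_imp_le) (use assms in simp)
  moreover have "\<bar>Re u\<bar> \<le> cmod u" by (rule abs_Re_le_cmod)
  ultimately show ?thesis using assms(7) by linarith
qed
lemma kron_tr: fixes A B :: "complex^2^2" shows "mtrace (kron A B) = A$0$0*B$0$0 + A$0$0*B$1$1 + A$1$1*B$0$0 + A$1$1*B$1$1"
  unfolding mtrace_def kron_def by (simp add: U22)

lemma kron_bound:
  fixes A B :: "complex^2^2"
  assumes pA: "psd A" and pB: "psd B" and b: "b < 4"
  shows "Re (mtrace (kron A B ** bell_meas b)) \<le> Re (mtrace (kron A B)) / 2"
proof -
  note fA = quad_facts[OF psd2[OF pA]]
  note fB = quad_facts[OF psd2[OF pB]]
  define a0 a1 b0 b1 where "a0 = Re (A$0$0)" "a1 = Re (A$1$1)" "b0 = Re (B$0$0)" "b1 = Re (B$1$1)"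
  define z w where "z = A$0$1" "w = B$0$1"
  have e: "A$0$0 = of_real a0" "A$1$1 = of_real a1" "B$0$0 = of_real b0" "B$1$1 = of_real b1"
     "A$1$0 = cnj z" "B$1$0 = cnj w" "A$0$1 = z" "B$0$1 = w"
    using fA fB unfolding a0_a1_b0_b1_def z_w_def by (simp_all add: complex_eq_iff)
  have nn: "a0 \<ge> 0" "a1 \<ge> 0" "b0 \<ge> 0" "b1 \<ge> 0" "(cmod z)^2 \<le> a0 * a1" "(cmod w)^2 \<le> b0 * b1"
    using fA fB unfolding a0_a1_b0_b1_def z_w_def by simp_all
  have B1: "2 * \<bar>Re (z*w)\<bar> \<le> a0 * b1 + a1 * b0"
    by (rule amgm_bound[OF nn]) (simp add: norm_mult)
  have B2: "2 * \<bar>Re (z*cnj w)\<bar> \<le> a0 * b0 + a1 * b1"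
  proof (rule amgm_bound[OF nn(1,2,4,3) nn(5)])
    show "(cmod w)^2 \<le> b1 * b0" using nn(6) by (simp add: mult.commute)
    show "cmod (z * cnj w) \<le> cmod z * cmod w" by (simp add: norm_mult)
  qed
  have rzw: "Re (z*w) = Re z * Re w - Im z * Im w" by simp
  have "2 * Re(z*w) \<le> a0 * b1 + a1 * b0"
    using B1 abs_ge_self[of "Re(z*w)"] by linarith
  then have B1'1: "2 * (Re z * Re w - Im z * Im w) \<le> a0 * b1 + a1 * b0" unfolding rzw .
  have "- 2 * Re(z*w) \<le> a0 * b1 + a1 * b0"
    using B1 abs_ge_minus_self[of "Re(z*w)"] by linarith
  then have B1'2: "- 2 * (Re z * Re w - Im z * Im w) \<le> a0 * b1 + a1 * b0" unfolding rzw .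
  note B1' = B1'1 B1'2
  have rzw2: "Re (z*cnj w) = Re z * Re w + Im z * Im w" by simp
  have "2 * Re(z*cnj w) \<le> a0 * b0 + a1 * b1"
    using B2 abs_ge_self[of "Re(z*cnj w)"] by linarith
  then have B2'1: "2 * (Re z * Re w + Im z * Im w) \<le> a0 * b0 + a1 * b1" unfolding rzw2 .
  have "- 2 * Re(z*cnj w) \<le> a0 * b0 + a1 * b1"
    using B2 abs_ge_minus_self[of "Re(z*cnj w)"] by linarith
  then have B2'2: "- 2 * (Re z * Re w + Im z * Im w) \<le> a0 * b0 + a1 * b1" unfolding rzw2 .
  note B2' = B2'1 B2'2
  have T: "Re (mtrace (kron A B)) = a0*b0 + a0*b1 + a1*b0 + a1*b1"
    unfolding kron_tr e by simp
  have "b = 0 \<or> b = 1 \<or> b = 2 \<or> b = 3" using b by auto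
  then show ?thesis
  proof (elim disjE)
    assume "b = 0" then show ?thesis unfolding T \<open>b = 0\<close> tr0 using B1'
      by (simp add: kron_def e algebra_simps)
  next
    assume "b = 1" then show ?thesis unfolding T \<open>b = 1\<close> tr1 using B1'
      by (simp add: kron_def e algebra_simps)
  next
    assume "b = 2" then show ?thesis unfolding T \<open>b = 2\<close> tr2 using B2'
      by (simp add: kron_def e algebra_simps)
  next
    assume "b = 3" then show ?thesis unfolding T \<open>b = 3\<close> tr3 using B2'
      by (simp add: kron_def e algebra_simps)
  qed
qed

lemma mtrace_add: "mtrace (X + Y) = mtrace X + mtrace Y"
  unfolding mtrace_def by (simp add: sum.distrib)

lemma matrix_add_rdistrib': "((A + B) ** C) = (A ** C) + (B ** C)"
  by (vector matrix_matrix_mult_def sum.distrib[symmetric] field_simps)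

lemma mtrace_sum: fixes n :: nat and M :: "nat \<Rightarrow> complex^'n^'n" shows "mtrace (\<Sum>i<n. M i) = (\<Sum>i<n. mtrace (M i))"
  by (induction n) (simp_all add: mtrace_add, simp add: mtrace_def)

lemma sum_mult_r: fixes n :: nat and M :: "nat \<Rightarrow> complex^'n^'n" shows "(\<Sum>i<n. M i) ** P = (\<Sum>i<n. M i ** P)"
  by (induction n) (simp_all add: matrix_add_rdistrib')

lemma sep_bound:
  assumes "separable_op (F :: complex^(2\<times>2)^(2\<times>2))" and b: "b < 4"
  shows "Re (mtrace (F ** bell_meas b)) \<le> Re (mtrace F) / 2"
proof -
  obtain n and A B :: "nat \<Rightarrow> complex^2^2" where AB: "\<forall>i<n. psd (A i) \<and> psd (B i)" "F = (\<Sum>i<n. kron (A i) (B i))"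
    using assms(1) unfolding separable_op_def by blast
  have "Re (mtrace (F ** bell_meas b)) = (\<Sum>i<n. Re (mtrace (kron (A i) (B i) ** bell_meas b)))"
    unfolding AB(2) sum_mult_r mtrace_sum by simp
  also have "\<dots> \<le> (\<Sum>i<n. Re (mtrace (kron (A i) (B i))) / 2)"
    by (rule sum_mono) (use AB(1) kron_bound b in auto)
  also have "\<dots> = Re (mtrace F) / 2"
    unfolding AB(2) mtrace_sum by (simp add: sum_divide_distrib)
  finally show ?thesis .
qed

lemma mtrace_id: "mtrace (mat 1 :: complex^(2\<times>2)^(2\<times>2)) = 4"
  unfolding mtrace_def mat_def by (simp add: U22)

lemma upper:
  assumes "sep_POVM 4 (F :: nat \<Rightarrow> complex^(2\<times>2)^(2\<times>2))"
  shows "Re (\<Sum>j<4. mtrace (F j ** bell_meas j)) \<le> 2"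
proof -
  have "Re (\<Sum>j<4. mtrace (F j ** bell_meas j)) = (\<Sum>j<4. Re (mtrace (F j ** bell_meas j)))"
    by simp
  also have "\<dots> \<le> (\<Sum>j<(4::nat). Re (mtrace (F j)) / 2)"
    by (rule sum_mono) (use assms sep_bound in \<open>auto simp: sep_POVM_def\<close>)
  also have "\<dots> = Re (mtrace (\<Sum>j<4. F j)) / 2"
    unfolding mtrace_sum by (simp add: sum_divide_distrib)
  also have "\<dots> = 2" using assms unfolding sep_POVM_def by (simp add: mtrace_id)
  finally show ?thesis .
qed

definition E :: "2 \<Rightarrow> complex^2^2" where "E x = (\<chi> i j. if i = x \<and> j = x then 1 else 0)"

lemma ifc: "(if P \<and> Q then (a::complex) else 0) = (if P then (if Q then a else 0) else 0)" by simp

lemma psd_E: "psd (E x)"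
proof -
  have "(\<Sum>i\<in>UNIV. \<Sum>j\<in>UNIV. cnj (v $ i) * E x $ i $ j * v $ j) = of_real ((cmod (v $ x))^2)" for v :: "complex^2"
  proof -
    have "(\<Sum>i\<in>UNIV. \<Sum>j\<in>UNIV. cnj (v $ i) * E x $ i $ j * v $ j) = cnj (v $ x) * v $ x"
    proof -
      have "x = 0 \<or> x = 1" using U2 by auto
      then show ?thesis unfolding E_def by (elim disjE) (simp_all add: U2)
    qed
    also have "\<dots> = of_real ((cmod (v $ x))^2)" by (simp only: complex_norm_square mult.commute)
    finally show ?thesis .
  qed
  then show ?thesis unfolding psd_def Let_def by simp
qed

definition Fw :: "nat \<Rightarrow> complex^(2\<times>2)^(2\<times>2)" where
  "Fw j = (if j = 0 then kron (E 0) (E 0) else if j = 1 then kron (E 1) (E 1)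
           else if j = 2 then kron (E 0) (E 1) else kron (E 1) (E 0))"

lemma sep_kron: "psd A \<Longrightarrow> psd B \<Longrightarrow> separable_op (kron A B)"
  unfolding separable_op_def
  by (rule exI[of _ 1], rule exI[of _ "\<lambda>_. A"], rule exI[of _ "\<lambda>_. B"]) simp


definition Ep :: "'n \<Rightarrow> complex^'n^'n" where "Ep p = (\<chi> i j. if i = p \<and> j = p then 1 else 0)"

lemma psd_Ep: "psd (Ep (p::'n::finite))"
proof -
  have "(\<Sum>i\<in>UNIV. \<Sum>j\<in>UNIV. cnj (v $ i) * Ep p $ i $ j * v $ j) = of_real ((cmod (v $ p))^2)" for v :: "complex^'n"
  proof -
    have "(\<Sum>j\<in>UNIV. cnj (v $ i) * Ep p $ i $ j * v $ j) = (if i = p then cnj (v $ p) * v $ p else 0)" for i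
      unfolding Ep_def by (cases "i = p") (simp_all add: if_distrib if_distribR cong: if_cong)
    then have "(\<Sum>i\<in>UNIV. \<Sum>j\<in>UNIV. cnj (v $ i) * Ep p $ i $ j * v $ j) = cnj (v $ p) * v $ p"
      by simp
    also have "\<dots> = of_real ((cmod (v $ p))^2)" by (simp only: complex_norm_square mult.commute)
    finally show ?thesis .
  qed
  then show ?thesis unfolding psd_def Let_def by simp
qed

lemma kronE: "kron (E x) (E y) = Ep (x, y)"
  unfolding kron_def E_def Ep_def by (simp add: vec_eq_iff)

lemma Fw_sep: "sep_POVM 4 Fw"
proof -
  have a: "psd (Fw j) \<and> separable_op (Fw j)" for j
  proof -
    have k: "psd (kron (E x) (E y)) \<and> separable_op (kron (E x) (E y))" for x y
      using sep_kron[OF psd_E psd_E, of x y] psd_Ep[of "(x,y)"] unfolding kronE by simp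
    show ?thesis unfolding Fw_def using k by simp
  qed
  have "(\<Sum>j<4. Fw j) = mat 1"
  proof -
    have "(\<Sum>j<4. Fw j) = Ep (0,0) + Ep (1,1) + Ep (0,1) + Ep (1,0)"
      by (simp add: eval_nat_numeral Fw_def kronE)
    also have "\<dots> = mat 1"
    proof -
      have "\<And>p q. (Ep (0,0) + Ep (1,1) + Ep (0,1) + Ep (1,0) :: complex^(2\<times>2)^(2\<times>2)) $ p $ q = mat 1 $ p $ q"
      proof -
        fix p q :: "2\<times>2"
        have "p \<in> UNIV" "q \<in> UNIV" by auto
        then show "(Ep (0,0) + Ep (1,1) + Ep (0,1) + Ep (1,0) :: complex^(2\<times>2)^(2\<times>2)) $ p $ q = mat 1 $ p $ q"
          unfolding U22 Ep_def mat_def by auto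
      qed
      then show ?thesis by (simp add: vec_eq_iff)
    qed
    finally show ?thesis .
  qed
  then show ?thesis using a unfolding sep_POVM_def by auto
qed

lemma Fw_val: "Re (\<Sum>j<4. mtrace (Fw j ** bell_meas j)) = 2"
proof -
  have "(\<Sum>j<4. mtrace (Fw j ** bell_meas j)) =
     mtrace (Fw 0 ** bell_meas 0) + mtrace (Fw 1 ** bell_meas 1) + mtrace (Fw 2 ** bell_meas 2) + mtrace (Fw 3 ** bell_meas 3)"
    by (simp add: eval_nat_numeral)
  also have "\<dots> = 2"
    unfolding tr0 tr1 tr2 tr3 by (simp add: Fw_def kronE Ep_def)
  finally show ?thesis by simp
qed

theorem mainTheorem6:
  shows "Q_sep 4 bell_meas = 1 / 2"
proof -
  have G: "(GREATEST v. \<exists>F. sep_POVM 4 F \<and> v = Re (\<Sum>j<4. mtrace (F j ** bell_meas j))) = (2::real)"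
  proof (rule Greatest_equality)
    show "\<exists>F. sep_POVM 4 F \<and> 2 = Re (\<Sum>j<4. mtrace (F j ** bell_meas j))"
      by (rule exI[of _ Fw], rule conjI[OF Fw_sep Fw_val[symmetric]])
    show "y \<le> 2" if "\<exists>F. sep_POVM 4 F \<and> y = Re (\<Sum>j<4. mtrace (F j ** bell_meas j))" for y
    proof -
      from that obtain F where "sep_POVM 4 F" "y = Re (\<Sum>j<4. mtrace (F j ** bell_meas j))" by blast
      then show ?thesis using upper[of F] by simp
    qed
  qed
  show ?thesis unfolding Q_sep_def G by simp
qed
end
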